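(* Every object $(X,E)$ of $\mathsf{StoneE}^\mathsf{R}$ is isomorphic in $\mathsf{StoneE}^\mathsf{R}$ to the Gleason space $\mathcal G(X/E)$. Consequently the functor $\mathcal G\colon\mathsf{KHaus}^\mathsf{R}\to\mathsf{Gle}^\mathsf{R}$ is a quasi-inverse of $\mathcal Q\colon\mathsf{Gle}^\mathsf{R}\to\mathsf{KHaus}^\mathsf{R}$ (natural isomorphisms $\mathrm{id}_{\mathsf{Gle}^\mathsf{R}}\cong\mathcal G\circ\mathcal Q$ and $\mathrm{id}_{\mathsf{KHaus}^\mathsf{R}}\cong\mathcal Q\circ\mathcal G$), and the inclusion of $\mathsf{Gle}^\mathsf{R}$ into $\mathsf{StoneE}^\mathsf{R}$ is an equivalence of allegories.
   Context: $\mathsf{KHaus}^\mathsf{R}$: compact Hausdorff spaces and closed relations, relational composition, ordered by inclusion, dagger converse. $\mathsf{StoneE}^\mathsf{R}$: objects $(X,E)$ with $X$ a Stone space and $E$ a closed equivalence relation on $X$; morphisms $(X,E)\to(X',E')$ closed relations $R\subseteq X\times X'$ with $R\circ E=R=E'\circ R$; identity $E$; relational composition; ordered by inclusion; dagger converse. A Gleason space is an object $(X,E)$ of $\mathsf{StoneE}^\mathsf{R}$ with $X$ extremally disconnected and $E$ irreducible (for every proper closed $F\subsetneq X$, $E[F]\neq X$); $\mathsf{Gle}^\mathsf{R}$ is the full subcategory on Gleason spaces. $\mathcal Q$ sends $(X,E)$ to $X/E$ and $R$ to $\pi'\circ R\circ\breve\pi$ with $\pi,\pi'$ the quotient maps.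 For a compact Hausdorff space $X$, $g_X\colon\widehat X\to X$ denotes its Gleason cover (the extremally disconnected compact Hausdorff space $\widehat X$ with the irreducible continuous surjection $g_X$). $\mathcal G(X)=(\widehat X,E_X)$ where $x\mathrel{E_X}y\iff g_X(x)=g_X(y)$, and for a closed relation $R\colon X\to X'$, $\mathcal G(R)=\breve g_{X'}\circ R\circ g_X$, i.e.\ $x\mathrel{\mathcal G(R)}x'\iff g_X(x)\mathrel{R}g_{X'}(x')$. An equivalence of allegories is an equivalence of categories preserving binary meets of morphisms and daggers. *)

theory Defs
  imports "HOL-Analysis.Analysis"
begin

definition khaus :: "'a topology \<Rightarrow> bool" where
  "khaus X \<longleftrightarrow> compact_space X \<and> Hausdorff_space X"

definition stone_space :: "'a topology \<Rightarrow> bool" where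
  "stone_space X \<longleftrightarrow> khaus X \<and>
     (\<forall>x \<in> topspace X. connected_component_of_set X x = {x})"

definition extremally_disconnected :: "'a topology \<Rightarrow> bool" where
  "extremally_disconnected X \<longleftrightarrow> (\<forall>U. openin X U \<longrightarrow> openin X (X closure_of U))"

definition closed_rel :: "'a topology \<Rightarrow> 'b topology \<Rightarrow> ('a \<times> 'b) set \<Rightarrow> bool" where
  "closed_rel X Y R \<longleftrightarrow> closedin (prod_topology X Y) R"

text \<open>Relational composition: R : X -> Y then S : Y -> Z is \<open>R O S\<close>
  (in the paper's notation \<open>S \<circ> R\<close>).\<close>

definition khaus_iso :: "'a topology \<Rightarrow> 'b topology \<Rightarrow> ('a \<times> 'b) set \<Rightarrow> bool" where
  "khaus_iso X Y R \<longleftrightarrow> closed_rel X Y R \<and>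
     (\<exists>S. closed_rel Y X S \<and> R O S = Id_on (topspace X) \<and> S O R = Id_on (topspace Y))"

type_synonym 'a sobj = "'a topology \<times> ('a \<times> 'a) set"

definition stoneE_obj :: "'a sobj \<Rightarrow> bool" where
  "stoneE_obj XE \<longleftrightarrow> (case XE of (X, E) \<Rightarrow>
     stone_space X \<and> equiv (topspace X) E \<and> closed_rel X X E)"

definition stoneE_mor :: "'a sobj \<Rightarrow> 'b sobj \<Rightarrow> ('a \<times> 'b) set \<Rightarrow> bool" where
  "stoneE_mor XE YF R \<longleftrightarrow> (case XE of (X, E) \<Rightarrow> case YF of (Y, F) \<Rightarrow>
     closed_rel X Y R \<and> E O R = R \<and> R O F = R)"

text \<open>Isomorphism in StoneE^R (identity on (X,E) is E).\<close>
definition stoneE_iso :: "'a sobj \<Rightarrow> 'b sobj \<Rightarrow> ('a \<times> 'b) set \<Rightarrow> bool" where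
  "stoneE_iso XE YF R \<longleftrightarrow> stoneE_mor XE YF R \<and>
     (\<exists>S. stoneE_mor YF XE S \<and> R O S = snd XE \<and> S O R = snd YF)"

definition stoneE_isomorphic :: "'a sobj \<Rightarrow> 'b sobj \<Rightarrow> bool" where
  "stoneE_isomorphic XE YF \<longleftrightarrow> (\<exists>R. stoneE_iso XE YF R)"

definition gleason_space :: "'a sobj \<Rightarrow> bool" where
  "gleason_space XE \<longleftrightarrow> stoneE_obj XE \<and> (case XE of (X, E) \<Rightarrow>
     extremally_disconnected X \<and>
     (\<forall>F. closedin X F \<and> F \<subset> topspace X \<longrightarrow> E `` F \<noteq> topspace X))"

definition quotient_space :: "'a topology \<Rightarrow> ('a \<times> 'a) set \<Rightarrow> 'a set topology" where
  "quotient_space X E = topology (\<lambda>U. U \<subseteq> topspace X // E \<and> openin X (\<Union>U))"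

definition Q_obj :: "'a sobj \<Rightarrow> 'a set topology" where
  "Q_obj XE = quotient_space (fst XE) (snd XE)"

text \<open>Q(R) = \<pi>' \<circ> R \<circ> pi converse.\<close>
definition Q_mor :: "'a sobj \<Rightarrow> 'b sobj \<Rightarrow> ('a \<times> 'b) set \<Rightarrow> ('a set \<times> 'b set) set" where
  "Q_mor XE YF R = {(snd XE `` {x}, snd YF `` {y}) | x y. (x, y) \<in> R}"

definition gleason_cover :: "'a topology \<Rightarrow> 'c topology \<Rightarrow> ('c \<Rightarrow> 'a) \<Rightarrow> bool" where
  "gleason_cover X Y g \<longleftrightarrow> khaus Y \<and> extremally_disconnected Y \<and>
     continuous_map Y X g \<and> g ` topspace Y = topspace X \<and>
     (\<forall>F. closedin Y F \<and> F \<subset> topspace Y \<longrightarrow> g ` F \<noteq> topspace X)"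

text \<open>The chosen Gleason cover of X, realised on the type \<open>'a set set\<close>
  (large enough to carry the Stone space of the regular open algebra of X).\<close>
definition gcover :: "'a topology \<Rightarrow> 'a set set topology \<times> ('a set set \<Rightarrow> 'a)" where
  "gcover X = (SOME (Y, g). gleason_cover X Y g)"

definition G_obj :: "'a topology \<Rightarrow> 'a set set sobj" where
  "G_obj X = (case gcover X of (Y, g) \<Rightarrow>
     (Y, {(y, y'). y \<in> topspace Y \<and> y' \<in> topspace Y \<and> g y = g y'}))"

definition G_mor :: "'a topology \<Rightarrow> 'b topology \<Rightarrow> ('a \<times> 'b) set
                     \<Rightarrow> ('a set set \<times> 'b set set) set" where
  "G_mor X X' R = (case gcover X of (Y, g) \<Rightarrow> case gcover X' of (Y', g') \<Rightarrow>
     {(y, y'). y \<in> topspace Y \<and> y' \<in> topspace Y' \<and> (g y, g' y') \<in> R})"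

definition unit_rel :: "'a sobj \<Rightarrow> ('a \<times> 'a set set set) set" where
  "unit_rel XE = (case gcover (Q_obj XE) of (Y, g) \<Rightarrow>
     {(x, y). x \<in> topspace (fst XE) \<and> y \<in> topspace Y \<and> g y = snd XE `` {x}})"

definition counit_rel :: "'a topology \<Rightarrow> ('a \<times> 'a set set set) set" where
  "counit_rel X = (case gcover X of (Y, g) \<Rightarrow>
     {(x, snd (G_obj X) `` {y}) | x y. x \<in> topspace X \<and> y \<in> topspace Y \<and> g y = x})"

end

theory Submission
  imports Defs
begin

definition UF :: "'a topology \<Rightarrow> 'a set set set" where
  "UF X = {p. p \<subseteq> Collect (openin X) \<and> {} \<notin> p \<and> (\<forall>U\<in>p. \<forall>V\<in>p. U \<inter> V \<in> p) \<and>
            (\<forall>U. openin X U \<longrightarrow> (U \<in> p \<longleftrightarrow> (\<forall>V\<in>p. U \<inter> V \<noteq> {})))}"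

definition OU :: "'a topology \<Rightarrow> 'a set \<Rightarrow> 'a set set set" where
  "OU X U = {p \<in> UF X. U \<in> p}"

definition GTop :: "'a topology \<Rightarrow> 'a set set topology" where
  "GTop X = topology (\<lambda>S. S \<subseteq> UF X \<and> (\<forall>p\<in>S. \<exists>U. openin X U \<and> p \<in> OU X U \<and> OU X U \<subseteq> S))"

lemma UF_open: "p \<in> UF X \<Longrightarrow> U \<in> p \<Longrightarrow> openin X U"
  unfolding UF_def by auto
lemma UF_ne: "p \<in> UF X \<Longrightarrow> U \<in> p \<Longrightarrow> U \<noteq> {}"
  unfolding UF_def by auto
lemma UF_Int: "p \<in> UF X \<Longrightarrow> U \<in> p \<Longrightarrow> V \<in> p \<Longrightarrow> U \<inter> V \<in> p"
  unfolding UF_def by auto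
lemma UF_ultra: "p \<in> UF X \<Longrightarrow> openin X U \<Longrightarrow> (U \<in> p \<longleftrightarrow> (\<forall>V\<in>p. U \<inter> V \<noteq> {}))"
  unfolding UF_def by auto
lemma UF_up: "p \<in> UF X \<Longrightarrow> U \<in> p \<Longrightarrow> openin X V \<Longrightarrow> U \<subseteq> V \<Longrightarrow> V \<in> p"
proof -
  assume p: "p \<in> UF X" and U: "U \<in> p" and V: "openin X V" and UV: "U \<subseteq> V"
  have "\<forall>W\<in>p. V \<inter> W \<noteq> {}"
  proof
    fix W assume "W \<in> p"
    then have "U \<inter> W \<in> p" using UF_Int p U by blast
    then have "U \<inter> W \<noteq> {}" using UF_ne p by blast
    then show "V \<inter> W \<noteq> {}" using UV by blast
  qed
  then show "V \<in> p" using UF_ultra[OF p V] by simp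
qed
lemma UF_notin: "p \<in> UF X \<Longrightarrow> openin X U \<Longrightarrow> U \<notin> p \<Longrightarrow> \<exists>V\<in>p. U \<inter> V = {}"
  using UF_ultra[of p X U] by auto
lemma UF_nonempty: "p \<in> UF X \<Longrightarrow> p \<noteq> {}"
  using UF_ultra[of p X "{}"] UF_ne by auto
lemma UF_top: "p \<in> UF X \<Longrightarrow> topspace X \<in> p"
proof -
  assume p: "p \<in> UF X"
  then obtain U where "U \<in> p" using UF_nonempty by blast
  moreover have "U \<subseteq> topspace X" using UF_open[OF p \<open>U \<in> p\<close>] openin_subset by blast
  ultimately show ?thesis using UF_up[OF p _ openin_topspace] by blast
qed

lemma UF_finite_Inter: assumes "p \<in> UF X" shows "finite F \<Longrightarrow> F \<noteq> {} \<Longrightarrow> F \<subseteq> p \<Longrightarrow> \<Inter>F \<in> p"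
proof (induction F rule: finite_ne_induct)
  case (singleton x) then show ?case by auto
next
  case (insert x F) then show ?case using UF_Int[OF assms] by auto
qed

lemma UF_extend:
  assumes G: "G \<subseteq> Collect (openin X)" "{} \<notin> G" "\<forall>U\<in>G. \<forall>V\<in>G. U \<inter> V \<in> G" "G \<noteq> {}"
  shows "\<exists>p \<in> UF X. G \<subseteq> p"
proof -
  define S where "S = {F. G \<subseteq> F \<and> F \<subseteq> Collect (openin X) \<and> {} \<notin> F \<and> (\<forall>U\<in>F. \<forall>V\<in>F. U \<inter> V \<in> F)}"
  have Sd: "F \<in> S \<longleftrightarrow> G \<subseteq> F \<and> F \<subseteq> Collect (openin X) \<and> {} \<notin> F \<and> (\<forall>U\<in>F. \<forall>V\<in>F. U \<inter> V \<in> F)" for F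
    unfolding S_def by simp
  have S1: "\<And>F. F \<in> S \<Longrightarrow> G \<subseteq> F" and S2: "\<And>F. F \<in> S \<Longrightarrow> F \<subseteq> Collect (openin X)"
    and S3: "\<And>F. F \<in> S \<Longrightarrow> {} \<notin> F" and S4: "\<And>F U V. F \<in> S \<Longrightarrow> U \<in> F \<Longrightarrow> V \<in> F \<Longrightarrow> U \<inter> V \<in> F"
    unfolding S_def by auto
  have "\<exists>M\<in>S. \<forall>F\<in>S. M \<subseteq> F \<longrightarrow> F = M"
  proof (rule subset_Zorn_nonempty)
    have "G \<in> S" unfolding Sd using G by auto
    then show "S \<noteq> {}" by blast
  next
    fix C assume C: "C \<noteq> {}" "subset.chain S C"
    have CS: "C \<subseteq> S" and ch: "\<And>A B. A \<in> C \<Longrightarrow> B \<in> C \<Longrightarrow> A \<subseteq> B \<or> B \<subseteq> A"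
      using C(2) unfolding subset.chain_def by auto
    obtain A0 where "A0 \<in> C" using C(1) by blast
    then have 1: "G \<subseteq> \<Union>C" using CS S1 by blast
    have 2: "\<Union>C \<subseteq> Collect (openin X)" using CS S2 by blast
    have 3: "{} \<notin> \<Union>C" using CS S3 by blast
    have 4: "U \<inter> V \<in> \<Union>C" if UC: "U \<in> \<Union>C" "V \<in> \<Union>C" for U V
    proof -
      obtain A B where AB: "A \<in> C" "B \<in> C" "U \<in> A" "V \<in> B" using UC by blast
      have "A \<in> S" "B \<in> S" using AB CS by auto
      then have iA: "\<forall>U\<in>A. \<forall>V\<in>A. U \<inter> V \<in> A" and iB: "\<forall>U\<in>B. \<forall>V\<in>B. U \<inter> V \<in> B" using S4 by auto
      from ch[OF AB(1,2)] show ?thesis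
      proof
        assume "A \<subseteq> B" then have "U \<inter> V \<in> B" using iB AB by blast
        then show ?thesis using AB by blast
      next
        assume "B \<subseteq> A" then have "U \<inter> V \<in> A" using iA AB by blast
        then show ?thesis using AB by blast
      qed
    qed
    show "\<Union>C \<in> S" unfolding Sd using 1 2 3 4 by blast
  qed
  then obtain M where M: "M \<in> S" and max: "\<And>F. F \<in> S \<Longrightarrow> M \<subseteq> F \<Longrightarrow> F = M" by blast
  have MS: "G \<subseteq> M" "M \<subseteq> Collect (openin X)" "{} \<notin> M" "\<forall>U\<in>M. \<forall>V\<in>M. U \<inter> V \<in> M"
    using M S1 S2 S3 S4 by auto
  have ultra: "U \<in> M \<longleftrightarrow> (\<forall>V\<in>M. U \<inter> V \<noteq> {})" if U: "openin X U" for U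
  proof
    assume "U \<in> M" then show "\<forall>V\<in>M. U \<inter> V \<noteq> {}" using MS by metis
  next
    assume H: "\<forall>V\<in>M. U \<inter> V \<noteq> {}"
    define M' where "M' = {W. openin X W \<and> (\<exists>V\<in>M. U \<inter> V \<subseteq> W)}"
    have a: "M \<subseteq> M'" unfolding M'_def using MS(2) by blast
    have b: "M' \<subseteq> Collect (openin X)" unfolding M'_def by blast
    have c: "{} \<notin> M'" using H unfolding M'_def by blast
    have d: "A \<inter> B \<in> M'" if AB: "A \<in> M'" "B \<in> M'" for A B
    proof -
      obtain V1 V2 where V: "V1 \<in> M" "V2 \<in> M" "U \<inter> V1 \<subseteq> A" "U \<inter> V2 \<subseteq> B" "openin X A" "openin X B"
        using AB unfolding M'_def by blast
      have "V1 \<inter> V2 \<in> M" using MS(4) V by blast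
      moreover have "U \<inter> (V1 \<inter> V2) \<subseteq> A \<inter> B" using V by blast
      ultimately show ?thesis using V unfolding M'_def by blast
    qed
    have "G \<subseteq> M'" using a MS(1) by (rule order_trans[rotated])
    then have "M' \<in> S" unfolding Sd using b c d by blast
    then have "M' = M" using max a by blast
    obtain V where "V \<in> M" using MS G by blast
    then have "U \<in> M'" unfolding M'_def using U by blast
    then show "U \<in> M" using \<open>M' = M\<close> by simp
  qed
  have "M \<in> UF X"
    unfolding UF_def using MS(2,3,4) ultra by (intro CollectI conjI allI impI) auto
  then show ?thesis using MS by blast
qed


lemma OU_Int: "openin X U \<Longrightarrow> openin X V \<Longrightarrow> OU X (U \<inter> V) = OU X U \<inter> OU X V"
proof (rule set_eqI)
  fix p assume U: "openin X U" and V: "openin X V"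
  show "p \<in> OU X (U \<inter> V) \<longleftrightarrow> p \<in> OU X U \<inter> OU X V"
  proof
    assume "p \<in> OU X (U \<inter> V)"
    then have p: "p \<in> UF X" and i: "U \<inter> V \<in> p" unfolding OU_def by auto
    have "U \<in> p" by (rule UF_up[OF p i U]) blast
    moreover have "V \<in> p" by (rule UF_up[OF p i V]) blast
    ultimately show "p \<in> OU X U \<inter> OU X V" using p unfolding OU_def by blast
  next
    assume "p \<in> OU X U \<inter> OU X V"
    then have p: "p \<in> UF X" and "U \<in> p" "V \<in> p" unfolding OU_def by auto
    then have "U \<inter> V \<in> p" using UF_Int by blast
    then show "p \<in> OU X (U \<inter> V)" using p unfolding OU_def by blast
  qed
qed

lemma OU_sub: "OU X U \<subseteq> UF X" unfolding OU_def by auto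

lemma istop_GT: "istopology (\<lambda>S. S \<subseteq> UF X \<and> (\<forall>p\<in>S. \<exists>U. openin X U \<and> p \<in> OU X U \<and> OU X U \<subseteq> S))"
  unfolding istopology_def
proof (rule conjI; intro allI impI)
  fix S T assume S: "S \<subseteq> UF X \<and> (\<forall>p\<in>S. \<exists>U. openin X U \<and> p \<in> OU X U \<and> OU X U \<subseteq> S)"
    and T: "T \<subseteq> UF X \<and> (\<forall>p\<in>T. \<exists>U. openin X U \<and> p \<in> OU X U \<and> OU X U \<subseteq> T)"
  show "S \<inter> T \<subseteq> UF X \<and> (\<forall>p\<in>S \<inter> T. \<exists>U. openin X U \<and> p \<in> OU X U \<and> OU X U \<subseteq> S \<inter> T)"
  proof (intro conjI ballI)
    show "S \<inter> T \<subseteq> UF X" using S by blast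
  next
    fix p assume p: "p \<in> S \<inter> T"
    then obtain U V where UV: "openin X U" "p \<in> OU X U" "OU X U \<subseteq> S" "openin X V" "p \<in> OU X V" "OU X V \<subseteq> T"
      using S T by blast
    have e: "OU X (U \<inter> V) = OU X U \<inter> OU X V" using OU_Int UV by blast
    have "p \<in> OU X (U \<inter> V)" unfolding e using UV by blast
    moreover have "OU X (U \<inter> V) \<subseteq> S \<inter> T" unfolding e using UV by blast
    moreover have "openin X (U \<inter> V)" using UV by blast
    ultimately show "\<exists>U. openin X U \<and> p \<in> OU X U \<and> OU X U \<subseteq> S \<inter> T" by blast
  qed
next
  fix K assume K: "\<forall>S\<in>K. S \<subseteq> UF X \<and> (\<forall>p\<in>S. \<exists>U. openin X U \<and> p \<in> OU X U \<and> OU X U \<subseteq> S)"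
  show "\<Union>K \<subseteq> UF X \<and> (\<forall>p\<in>\<Union>K. \<exists>U. openin X U \<and> p \<in> OU X U \<and> OU X U \<subseteq> \<Union>K)"
  proof (intro conjI ballI)
    show "\<Union>K \<subseteq> UF X" using K by blast
  next
    fix p assume "p \<in> \<Union>K"
    then obtain S where "S \<in> K" "p \<in> S" by blast
    then obtain U where "openin X U" "p \<in> OU X U" "OU X U \<subseteq> S" using K by blast
    then show "\<exists>U. openin X U \<and> p \<in> OU X U \<and> OU X U \<subseteq> \<Union>K" using \<open>S \<in> K\<close> by blast
  qed
qed

lemma openin_GT: "openin (GTop X) S \<longleftrightarrow> S \<subseteq> UF X \<and> (\<forall>p\<in>S. \<exists>U. openin X U \<and> p \<in> OU X U \<and> OU X U \<subseteq> S)"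
  by (simp only: GTop_def topology_inverse'[OF istop_GT])

lemma openin_OU: "openin X U \<Longrightarrow> openin (GTop X) (OU X U)"
  unfolding openin_GT using OU_sub by blast

lemma topspace_GT: "topspace (GTop X) = UF X"
proof
  show "topspace (GTop X) \<subseteq> UF X" by (auto simp: topspace_def openin_GT)
next
  have "OU X (topspace X) = UF X" unfolding OU_def using UF_top by blast
  then have "openin (GTop X) (UF X)" using openin_OU by (metis openin_topspace)
  then show "UF X \<subseteq> topspace (GTop X)" by (simp add: openin_subset)
qed

lemma OU_compl: "p \<in> UF X \<Longrightarrow> openin X U \<Longrightarrow> p \<notin> OU X U \<longleftrightarrow> topspace X - X closure_of U \<in> p"
proof -
  assume p: "p \<in> UF X" and U: "openin X U"
  have op: "openin X (topspace X - X closure_of U)" by (simp add: openin_diff)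
  show ?thesis
  proof
    assume "p \<notin> OU X U"
    then have "U \<notin> p" using p unfolding OU_def by blast
    then obtain V where V: "V \<in> p" "U \<inter> V = {}" using UF_notin p U by blast
    have "openin X V" using V p UF_open by blast
    then have "V \<inter> X closure_of U = {}" using openin_Int_closure_of_eq_empty V by blast
    then have "V \<subseteq> topspace X - X closure_of U" using \<open>openin X V\<close> openin_subset by blast
    then show "topspace X - X closure_of U \<in> p" using UF_up p V op by blast
  next
    assume A: "topspace X - X closure_of U \<in> p"
    show "p \<notin> OU X U"
    proof
      assume "p \<in> OU X U"
      then have "U \<in> p" unfolding OU_def by blast
      then have "U \<inter> (topspace X - X closure_of U) \<in> p" using A UF_Int p by blast
      moreover have "U \<inter> (topspace X - X closure_of U) = {}"
        using closure_of_subset[of U X] openin_subset[OF U] by blast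
      ultimately show False using UF_ne p by blast
    qed
  qed
qed

lemma OU_nonempty: "openin X U \<Longrightarrow> U \<noteq> {} \<Longrightarrow> \<exists>p \<in> UF X. U \<in> p"
  using UF_extend[of "{U}" X] by auto

definition convg :: "'a topology \<Rightarrow> 'a set set \<Rightarrow> 'a \<Rightarrow> bool" where
  "convg X p x \<longleftrightarrow> x \<in> topspace X \<and> (\<forall>N. openin X N \<and> x \<in> N \<longrightarrow> N \<in> p)"

definition gmap :: "'a topology \<Rightarrow> 'a set set \<Rightarrow> 'a" where
  "gmap X p = (THE x. convg X p x)"

lemma conv_ex1:
  assumes X: "khaus X" and p: "p \<in> UF X"
  shows "\<exists>!x. convg X p x"
proof -
  let ?U = "(\<lambda>V. X closure_of V) ` p"
  have cpt: "compact_space X" and H: "Hausdorff_space X" using X unfolding khaus_def by auto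
  have fip: "\<And>\<U>. (\<forall>C\<in>\<U>. closedin X C) \<Longrightarrow> (\<forall>\<F>. finite \<F> \<and> \<F> \<subseteq> \<U> \<longrightarrow> \<Inter>\<F> \<noteq> {}) \<Longrightarrow> \<Inter>\<U> \<noteq> {}"
    using cpt[unfolded compact_space_fip] by blast
  have c1: "\<forall>C\<in>?U. closedin X C" by auto
  have c2: "\<forall>F. finite F \<and> F \<subseteq> ?U \<longrightarrow> \<Inter>F \<noteq> {}"
  proof (intro allI impI)
    fix F assume F: "finite F \<and> F \<subseteq> ?U"
    then obtain F' where F': "F' \<subseteq> p" "finite F'" "F = (\<lambda>V. X closure_of V) ` F'"
      using finite_subset_image[of F "\<lambda>V. X closure_of V" p] by blast
    show "\<Inter>F \<noteq> {}"
    proof (cases "F' = {}")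
      case True then show ?thesis using F' by auto
    next
      case False
      then have "\<Inter>F' \<in> p" using UF_finite_Inter[OF p] F' by blast
      then have ne: "\<Inter>F' \<noteq> {}" using UF_ne p by blast
      have "\<Inter>F' \<subseteq> \<Inter>F"
      proof
        fix x assume x: "x \<in> \<Inter>F'"
        show "x \<in> \<Inter>F"
        proof
          fix C assume "C \<in> F"
          then obtain V where V: "V \<in> F'" "C = X closure_of V" using F' by blast
          then have "V \<subseteq> topspace X" using F' p UF_open openin_subset by blast
          then have "V \<subseteq> X closure_of V" by (rule closure_of_subset)
          then show "x \<in> C" using x V by blast
        qed
      qed
      then show ?thesis using ne by blast
    qed
  qed
  have "\<Inter>?U \<noteq> {}" by (rule fip[OF c1 c2])
  then obtain x where x: "x \<in> \<Inter>?U" by blast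
  obtain V0 where "V0 \<in> p" using UF_nonempty p by blast
  then have "x \<in> X closure_of V0" using x by blast
  then have xt: "x \<in> topspace X" using closure_of_subset_topspace[of X V0] by blast
  have cx: "convg X p x"
    unfolding convg_def
  proof (intro conjI allI impI)
    fix N assume N: "openin X N \<and> x \<in> N"
    have "\<forall>V\<in>p. N \<inter> V \<noteq> {}"
    proof
      fix V assume "V \<in> p"
      then have "x \<in> X closure_of V" using x by blast
      then show "N \<inter> V \<noteq> {}" using N unfolding in_closure_of by blast
    qed
    then show "N \<in> p" using UF_ultra[OF p] N by simp
  qed (rule xt)
  moreover have "y = x" if cy: "convg X p y" for y
  proof (rule ccontr)
    assume yx: "y \<noteq> x"
    have yt: "y \<in> topspace X" using cy unfolding convg_def by blast
    obtain A B where AB: "openin X A" "openin X B" "y \<in> A" "x \<in> B" "disjnt A B"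
      using H[unfolded Hausdorff_space_def, rule_format, OF conjI[OF yt conjI[OF xt yx]]] by blast
    have "A \<in> p" using cy AB unfolding convg_def by blast
    moreover have "B \<in> p" using cx AB unfolding convg_def by blast
    ultimately have "A \<inter> B \<in> p" using UF_Int p by blast
    then show False using UF_ne p AB(5) unfolding disjnt_def by blast
  qed
  ultimately show ?thesis by blast
qed

lemma gmap_conv: "khaus X \<Longrightarrow> p \<in> UF X \<Longrightarrow> convg X p (gmap X p)"
  unfolding gmap_def by (rule theI'[OF conv_ex1])

lemma gmap_eq: assumes X: "khaus X" and p: "p \<in> UF X" and c: "convg X p x" shows "gmap X p = x"
  unfolding gmap_def by (rule the1_equality[OF conv_ex1[OF X p] c])

lemma gmap_closure: "khaus X \<Longrightarrow> p \<in> UF X \<Longrightarrow> U \<in> p \<Longrightarrow> gmap X p \<in> X closure_of U"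
  unfolding in_closure_of
proof (intro conjI allI impI)
  assume X: "khaus X" and p: "p \<in> UF X" and U: "U \<in> p"
  show "gmap X p \<in> topspace X" using gmap_conv[OF X p] unfolding convg_def by blast
  fix N assume N: "gmap X p \<in> N \<and> openin X N"
  then have "N \<in> p" using gmap_conv[OF X p] unfolding convg_def by blast
  then have "N \<inter> U \<in> p" using UF_Int p U by blast
  then show "\<exists>y. y \<in> U \<and> y \<in> N" using UF_ne p by blast
qed

lemma gmap_in: "khaus X \<Longrightarrow> p \<in> UF X \<Longrightarrow> openin X U \<Longrightarrow> gmap X p \<in> U \<Longrightarrow> U \<in> p"
  using gmap_conv unfolding convg_def by blast

lemma GT_cont:
  assumes X: "khaus X"
  shows "continuous_map (GTop X) X (gmap X)"
  unfolding continuous_map_def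
proof (intro conjI allI impI)
  have reg: "regular_space X" using X compact_Hausdorff_imp_regular_space unfolding khaus_def by blast
  show "gmap X \<in> topspace (GTop X) \<rightarrow> topspace X"
    using gmap_conv[OF X] unfolding topspace_GT convg_def by blast
  fix W assume W: "openin X W"
  show "openin (GTop X) {p \<in> topspace (GTop X). gmap X p \<in> W}"
    unfolding openin_GT topspace_GT
  proof (intro conjI ballI)
    show "{p \<in> UF X. gmap X p \<in> W} \<subseteq> UF X" by blast
  next
    fix p assume p: "p \<in> {p \<in> UF X. gmap X p \<in> W}"
    then have pu: "p \<in> UF X" and gw: "gmap X p \<in> W" by auto
    have gt: "gmap X p \<in> topspace X" using gmap_conv[OF X pu] unfolding convg_def by blast
    have clW: "closedin X (topspace X - W)" using W by blast
    have "gmap X p \<in> topspace X - (topspace X - W)" using gt gw by blast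
    then obtain U V where UV: "openin X U" "openin X V" "gmap X p \<in> U" "topspace X - W \<subseteq> V" "disjnt U V"
      using reg[unfolded regular_space_def, rule_format, OF conjI[OF clW]] by blast
    have sub: "U \<subseteq> topspace X - V" using UV(5) openin_subset[OF UV(1)] unfolding disjnt_def by blast
    have clV: "closedin X (topspace X - V)" using UV(2) by blast
    have "X closure_of U \<subseteq> topspace X - V" by (rule closure_of_minimal[OF sub clV])
    then have cl: "X closure_of U \<subseteq> W" using UV(4) by blast
    have "U \<in> p" using gmap_in[OF X pu UV(1,3)] .
    then have "p \<in> OU X U" using pu unfolding OU_def by blast
    moreover have "OU X U \<subseteq> {p \<in> UF X. gmap X p \<in> W}"
    proof
      fix q assume "q \<in> OU X U"
      then have q: "q \<in> UF X" "U \<in> q" unfolding OU_def by auto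
      then have "gmap X q \<in> X closure_of U" using gmap_closure[OF X] by blast
      then show "q \<in> {p \<in> UF X. gmap X p \<in> W}" using q cl by blast
    qed
    ultimately show "\<exists>U. openin X U \<and> p \<in> OU X U \<and> OU X U \<subseteq> {p \<in> UF X. gmap X p \<in> W}"
      using UV(1) by blast
  qed
qed

lemma GT_surj:
  assumes X: "khaus X"
  shows "gmap X ` topspace (GTop X) = topspace X"
proof
  show "gmap X ` topspace (GTop X) \<subseteq> topspace X"
    using gmap_conv[OF X] unfolding topspace_GT convg_def by blast
next
  show "topspace X \<subseteq> gmap X ` topspace (GTop X)"
  proof
    fix x assume x: "x \<in> topspace X"
    let ?G = "{N. openin X N \<and> x \<in> N}"
    have "\<exists>p \<in> UF X. ?G \<subseteq> p"
      by (rule UF_extend) (use x in auto)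
    then obtain p where p: "p \<in> UF X" "?G \<subseteq> p" by blast
    then have "convg X p x" unfolding convg_def using x by blast
    then have "gmap X p = x" using gmap_eq[OF X p(1)] by blast
    then show "x \<in> gmap X ` topspace (GTop X)" using p unfolding topspace_GT by blast
  qed
qed

lemma GT_sep:
  assumes pq: "p \<in> UF X" "q \<in> UF X" "U \<in> p" "U \<notin> q"
  shows "\<exists>A B. openin (GTop X) A \<and> openin (GTop X) B \<and> p \<in> A \<and> q \<in> B \<and> disjnt A B"
proof -
  have U: "openin X U" using pq UF_open by blast
  then obtain V where V: "V \<in> q" "U \<inter> V = {}" using UF_notin pq by blast
  have Vo: "openin X V" using V pq UF_open by blast
  have "OU X U \<inter> OU X V = {}"
  proof (rule ccontr)
    assume "OU X U \<inter> OU X V \<noteq> {}"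
    then obtain r where "r \<in> UF X" "U \<in> r" "V \<in> r" unfolding OU_def by blast
    then have "U \<inter> V \<in> r" using UF_Int by blast
    then show False using UF_ne[OF \<open>r \<in> UF X\<close>] V(2) by blast
  qed
  then have d: "disjnt (OU X U) (OU X V)" unfolding disjnt_def .
  have "p \<in> OU X U" "q \<in> OU X V" using pq V unfolding OU_def by auto
  then show ?thesis using d openin_OU[OF U] openin_OU[OF Vo] by blast
qed

lemma GT_haus:
  assumes X: "khaus X"
  shows "Hausdorff_space (GTop X)"
  unfolding Hausdorff_space_def topspace_GT
proof (intro allI impI)
  fix p q assume pq: "p \<in> UF X \<and> q \<in> UF X \<and> p \<noteq> q"
  show "\<exists>U V. openin (GTop X) U \<and> openin (GTop X) V \<and> p \<in> U \<and> q \<in> V \<and> disjnt U V"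
  proof (cases "p \<subseteq> q")
    case True
    then obtain U where U: "U \<in> q" "U \<notin> p" using pq by blast
    obtain A B where "openin (GTop X) A" "openin (GTop X) B" "q \<in> A" "p \<in> B" "disjnt A B"
      using GT_sep[of q X p U] pq U by blast
    then show ?thesis using disjnt_sym by blast
  next
    case False
    then obtain U where U: "U \<in> p" "U \<notin> q" by blast
    show ?thesis using GT_sep[of p X q U] pq U by blast
  qed
qed

lemma GT_cptG:
  assumes X: "khaus X"
  shows "compact_space (GTop X)"
  unfolding compact_space_def compactin_def topspace_GT
proof (rule conjI[OF subset_refl], intro allI impI)
  fix \<U> assume U: "(\<forall>U\<in>\<U>. openin (GTop X) U) \<and> UF X \<subseteq> \<Union>\<U>"
  show "\<exists>\<F>. finite \<F> \<and> \<F> \<subseteq> \<U> \<and> UF X \<subseteq> \<Union>\<F>"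
  proof (rule ccontr)
    assume nf: "\<not> ?thesis"
    define G where "G = {V. openin X V \<and> (\<exists>\<F>. finite \<F> \<and> \<F> \<subseteq> \<U> \<and> UF X - \<Union>\<F> \<subseteq> OU X V)}"
    have "\<exists>p \<in> UF X. G \<subseteq> p"
    proof (rule UF_extend)
      show "G \<subseteq> Collect (openin X)" unfolding G_def by blast
      show "{} \<notin> G"
      proof
        assume "{} \<in> G"
        then obtain \<F> where "finite \<F>" "\<F> \<subseteq> \<U>" "UF X - \<Union>\<F> \<subseteq> OU X {}" unfolding G_def by blast
        moreover have "OU X {} = {}" unfolding OU_def using UF_ne by blast
        ultimately show False using nf by blast
      qed
      show "\<forall>U\<in>G. \<forall>V\<in>G. U \<inter> V \<in> G"
      proof (intro ballI)
        fix A B assume "A \<in> G" "B \<in> G"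
        then obtain F1 F2 where F: "finite F1" "F1 \<subseteq> \<U>" "UF X - \<Union>F1 \<subseteq> OU X A"
          "finite F2" "F2 \<subseteq> \<U>" "UF X - \<Union>F2 \<subseteq> OU X B" "openin X A" "openin X B"
          unfolding G_def by blast
        have "UF X - \<Union>(F1 \<union> F2) \<subseteq> OU X (A \<inter> B)"
          unfolding OU_Int[OF F(7,8)] using F(3,6) by blast
        then show "A \<inter> B \<in> G" unfolding G_def using F
          by (intro CollectI conjI exI[of _ "F1 \<union> F2"]) auto
      qed
      have "OU X (topspace X) = UF X" unfolding OU_def using UF_top by blast
      then have "topspace X \<in> G" unfolding G_def by (intro CollectI conjI exI[of _ "{}"]) auto
      then show "G \<noteq> {}" by blast
    qed
    then obtain p where p: "p \<in> UF X" "G \<subseteq> p" by blast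
    then obtain S where S: "S \<in> \<U>" "p \<in> S" using U by blast
    then obtain W where W: "openin X W" "p \<in> OU X W" "OU X W \<subseteq> S" using U unfolding openin_GT by blast
    let ?W = "topspace X - X closure_of W"
    have "UF X - \<Union>{S} \<subseteq> OU X ?W"
    proof
      fix q assume "q \<in> UF X - \<Union>{S}"
      then have "q \<in> UF X" "q \<notin> OU X W" using W by auto
      then show "q \<in> OU X ?W" using OU_compl W(1) unfolding OU_def by blast
    qed
    then have "?W \<in> G" unfolding G_def using S by (intro CollectI conjI exI[of _ "{S}"]) (auto simp: openin_diff)
    then have "?W \<in> p" using p by blast
    then have "p \<notin> OU X W" using OU_compl p(1) W(1) by blast
    then show False using W by blast
  qed
qed

lemma GT_ed:
  assumes X: "khaus X"
  shows "extremally_disconnected (GTop X)"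
  unfolding extremally_disconnected_def
proof (intro allI impI)
  fix S assume S: "openin (GTop X) S"
  define W where "W = \<Union>{U. openin X U \<and> OU X U \<subseteq> S}"
  have Wo: "openin X W" unfolding W_def by blast
  have "GTop X closure_of S = OU X W"
  proof (rule set_eqI)
    fix p
    show "p \<in> GTop X closure_of S \<longleftrightarrow> p \<in> OU X W"
    proof
      assume pc: "p \<in> GTop X closure_of S"
      have pu: "p \<in> UF X" using pc closure_of_subset_topspace[of "GTop X" S] topspace_GT by blast
      have cl: "\<forall>T. p \<in> T \<and> openin (GTop X) T \<longrightarrow> (\<exists>y. y \<in> S \<and> y \<in> T)"
        using pc unfolding in_closure_of by blast
      show "p \<in> OU X W"
      proof (rule ccontr)
        assume "p \<notin> OU X W"
        then have "W \<notin> p" using pu unfolding OU_def by blast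
        then obtain V where V: "V \<in> p" "W \<inter> V = {}" using UF_notin pu Wo by blast
        have Vo: "openin X V" using V pu UF_open by blast
        have "p \<in> OU X V" using V pu unfolding OU_def by blast
        then obtain q where q: "q \<in> S" "q \<in> OU X V"
          using cl openin_OU[OF Vo] by blast
        then obtain U where U: "openin X U" "q \<in> OU X U" "OU X U \<subseteq> S" using S unfolding openin_GT by blast
        then have UW: "U \<subseteq> W" unfolding W_def by blast
        have qu: "q \<in> UF X" "U \<in> q" "V \<in> q" using U q unfolding OU_def by auto
        then have "U \<inter> V \<in> q" using UF_Int by blast
        then have "U \<inter> V \<noteq> {}" using UF_ne[OF qu(1)] by blast
        then show False using UW V(2) by blast
      qed
    next
      assume pW: "p \<in> OU X W"
      then have pu: "p \<in> UF X" and Wp: "W \<in> p" unfolding OU_def by auto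
      show "p \<in> GTop X closure_of S"
        unfolding in_closure_of topspace_GT
      proof (intro conjI allI impI)
        show "p \<in> UF X" by (rule pu)
        fix N assume N: "p \<in> N \<and> openin (GTop X) N"
        then obtain V where V: "openin X V" "p \<in> OU X V" "OU X V \<subseteq> N" unfolding openin_GT by blast
        then have "V \<in> p" unfolding OU_def by blast
        then have "V \<inter> W \<in> p" using UF_Int pu Wp by blast
        then have "V \<inter> W \<noteq> {}" using UF_ne pu by blast
        then obtain U where U: "openin X U" "OU X U \<subseteq> S" "V \<inter> U \<noteq> {}" unfolding W_def by blast
        have VUo: "openin X (V \<inter> U)" using V(1) U(1) by blast
        obtain q where q: "q \<in> UF X" "V \<inter> U \<in> q" using OU_nonempty[OF VUo U(3)] by blast
        have "V \<in> q" by (rule UF_up[OF q(1) q(2) V(1)]) blast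
        moreover have "U \<in> q" by (rule UF_up[OF q(1) q(2) U(1)]) blast
        ultimately have "q \<in> OU X U" "q \<in> OU X V" using q unfolding OU_def by auto
        then show "\<exists>y. y \<in> S \<and> y \<in> N" using U(2) V(3) by blast
      qed
    qed
  qed
  then show "openin (GTop X) (GTop X closure_of S)" using openin_OU[OF Wo] by simp
qed

lemma GT_irr:
  assumes X: "khaus X"
  shows "\<forall>F. closedin (GTop X) F \<and> F \<subset> topspace (GTop X) \<longrightarrow> gmap X ` F \<noteq> topspace X"
proof (intro allI impI)
  fix F assume F: "closedin (GTop X) F \<and> F \<subset> topspace (GTop X)"
  then obtain p where p: "p \<in> UF X" "p \<notin> F" unfolding topspace_GT by blast
  have "openin (GTop X) (UF X - F)" using F unfolding topspace_GT by (metis closedin_def topspace_GT)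
  then obtain U where U: "openin X U" "p \<in> OU X U" "OU X U \<subseteq> UF X - F"
    using p unfolding openin_GT by blast
  then obtain x where x: "x \<in> U" using UF_ne unfolding OU_def by blast
  have "x \<notin> gmap X ` F"
  proof
    assume "x \<in> gmap X ` F"
    then obtain q where q: "q \<in> F" "gmap X q = x" by blast
    have "q \<in> UF X" using F q closedin_subset topspace_GT by blast
    then have "U \<in> q" using gmap_in[OF X] U x q by blast
    then show False using U q \<open>q \<in> UF X\<close> unfolding OU_def by blast
  qed
  moreover have "x \<in> topspace X" using x U openin_subset by blast
  ultimately show "gmap X ` F \<noteq> topspace X" by blast
qed

lemma gleason_cover_GT:
  assumes X: "khaus X"
  shows "gleason_cover X (GTop X) (gmap X)"
  unfolding gleason_cover_def khaus_def
  using GT_cont[OF X] GT_surj[OF X] GT_haus[OF X] GT_cptG[OF X] GT_ed[OF X] GT_irr[OF X] by blast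


lemma istop_quot:
  assumes E: "equiv (topspace X) E"
  shows "istopology (\<lambda>U. U \<subseteq> topspace X // E \<and> openin X (\<Union>U))"
  unfolding istopology_def
proof (rule conjI; intro allI impI)
  fix S T assume S: "S \<subseteq> topspace X // E \<and> openin X (\<Union>S)" and T: "T \<subseteq> topspace X // E \<and> openin X (\<Union>T)"
  have "\<Union>(S \<inter> T) = \<Union>S \<inter> \<Union>T"
  proof
    show "\<Union>(S \<inter> T) \<subseteq> \<Union>S \<inter> \<Union>T" by blast
    show "\<Union>S \<inter> \<Union>T \<subseteq> \<Union>(S \<inter> T)"
    proof
      fix x assume "x \<in> \<Union>S \<inter> \<Union>T"
      then obtain a b where ab: "a \<in> S" "b \<in> T" "x \<in> a" "x \<in> b" by blast
      then have "a \<in> topspace X // E" "b \<in> topspace X // E" using S T by blast+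
      then have "a = b \<or> a \<inter> b = {}" using quotient_disj[OF E] by blast
      then have "a = b" using ab by blast
      then show "x \<in> \<Union>(S \<inter> T)" using ab by blast
    qed
  qed
  then show "S \<inter> T \<subseteq> topspace X // E \<and> openin X (\<Union>(S \<inter> T))" using S T by auto
next
  fix K assume K: "\<forall>S\<in>K. S \<subseteq> topspace X // E \<and> openin X (\<Union>S)"
  have "\<Union>(\<Union>K) = \<Union>(Union ` K)" by blast
  then show "\<Union>K \<subseteq> topspace X // E \<and> openin X (\<Union>(\<Union>K))" using K by auto
qed

lemma openin_quot:
  assumes E: "equiv (topspace X) E"
  shows "openin (quotient_space X E) U \<longleftrightarrow> U \<subseteq> topspace X // E \<and> openin X (\<Union>U)"
  by (simp only: quotient_space_def topology_inverse'[OF istop_quot[OF E]])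

lemma topspace_quot:
  assumes E: "equiv (topspace X) E"
  shows "topspace (quotient_space X E) = topspace X // E"
proof
  have "openin (quotient_space X E) (topspace (quotient_space X E))" by simp
  then show "topspace (quotient_space X E) \<subseteq> topspace X // E"
    unfolding openin_quot[OF E] by blast
  have "openin (quotient_space X E) (topspace X // E)"
    unfolding openin_quot[OF E] using Union_quotient[OF E] by simp
  then show "topspace X // E \<subseteq> topspace (quotient_space X E)" by (rule openin_subset)
qed

lemma class_in: "equiv A E \<Longrightarrow> c \<in> A // E \<Longrightarrow> x \<in> c \<Longrightarrow> c = E `` {x}"
  by (metis equiv_class_eq_iff quotientE Image_singleton_iff)

lemma cont_quot:
  assumes E: "equiv (topspace X) E"
  shows "continuous_map X (quotient_space X E) (\<lambda>x. E `` {x})"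
  unfolding continuous_map_def
proof (intro conjI allI impI)
  show "(\<lambda>x. E `` {x}) \<in> topspace X \<rightarrow> topspace (quotient_space X E)"
    unfolding topspace_quot[OF E] by (rule funcsetI, rule quotientI)
  fix U assume U: "openin (quotient_space X E) U"
  then have U1: "U \<subseteq> topspace X // E" and U2: "openin X (\<Union>U)" unfolding openin_quot[OF E] by auto
  have "{x \<in> topspace X. E `` {x} \<in> U} = \<Union>U"
  proof
    show "{x \<in> topspace X. E `` {x} \<in> U} \<subseteq> \<Union>U"
    proof
      fix x assume "x \<in> {x \<in> topspace X. E `` {x} \<in> U}"
      then have x: "x \<in> topspace X" "E `` {x} \<in> U" by auto
      have "x \<in> E `` {x}" by (rule equiv_class_self[OF E x(1)])
      then show "x \<in> \<Union>U" using x by blast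
    qed
    show "\<Union>U \<subseteq> {x \<in> topspace X. E `` {x} \<in> U}"
    proof
      fix x assume "x \<in> \<Union>U"
      then obtain c where c: "c \<in> U" "x \<in> c" by blast
      then have cq: "c \<in> topspace X // E" using U1 by blast
      then have "c = E `` {x}" using class_in[OF E cq c(2)] by simp
      moreover have "x \<in> topspace X" using cq c(2) Union_quotient[OF E] by blast
      ultimately show "x \<in> {x \<in> topspace X. E `` {x} \<in> U}" using c by simp
    qed
  qed
  then show "openin X {x \<in> topspace X. E `` {x} \<in> U}" using U2 by simp
qed

lemma Image_snd: "E \<subseteq> T \<times> T \<Longrightarrow> E `` K = snd ` ((K \<inter> T) \<times> T \<inter> E)"
proof
  assume Es: "E \<subseteq> T \<times> T"
  show "E `` K \<subseteq> snd ` ((K \<inter> T) \<times> T \<inter> E)"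
  proof
    fix z assume "z \<in> E `` K"
    then obtain k where k: "k \<in> K" "(k, z) \<in> E" by blast
    then have "(k, z) \<in> (K \<inter> T) \<times> T \<inter> E" using Es by blast
    then show "z \<in> snd ` ((K \<inter> T) \<times> T \<inter> E)" by (rule rev_image_eqI) simp
  qed
  show "snd ` ((K \<inter> T) \<times> T \<inter> E) \<subseteq> E `` K" by force
qed

lemma closed_Image:
  assumes X: "compact_space X" and E: "E \<subseteq> topspace X \<times> topspace X" and Ec: "closedin (prod_topology X X) E"
    and K: "closedin X K"
  shows "closedin X (E `` K)"
proof -
  have Kt: "K \<inter> topspace X = K" using closedin_subset[OF K] by blast
  have "closedin (prod_topology X X) (K \<times> topspace X)"
    unfolding closedin_prod_Times_iff using K by auto
  then have c1: "closedin (prod_topology X X) (K \<times> topspace X \<inter> E)" using Ec by (rule closedin_Int)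
  have "closedin X (snd ` (K \<times> topspace X \<inter> E))"
    using closed_map_snd[OF X, of X] c1 unfolding closed_map_def by blast
  then show ?thesis using Image_snd[OF E, of K] Kt by simp
qed

lemma quot_open_sat:
  assumes X: "compact_space X" and E: "equiv (topspace X) E" and Ec: "closedin (prod_topology X X) E"
    and A: "openin X A"
  shows "openin (quotient_space X E) {c \<in> topspace X // E. c \<subseteq> A}"
proof -
  let ?T = "topspace X"
  have Esub: "E \<subseteq> ?T \<times> ?T" using E unfolding equiv_def by blast
  have "sym E" using E unfolding equiv_def by blast
  then have symE: "\<And>a b. (a, b) \<in> E \<Longrightarrow> (b, a) \<in> E" by (rule symD)
  have cl: "closedin X (E `` (?T - A))"
    by (rule closed_Image[OF X Esub Ec]) (use A in blast)
  have eq: "\<Union>{c \<in> ?T // E. c \<subseteq> A} = ?T - E `` (?T - A)"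
  proof
    show "\<Union>{c \<in> ?T // E. c \<subseteq> A} \<subseteq> ?T - E `` (?T - A)"
    proof
      fix z assume "z \<in> \<Union>{c \<in> ?T // E. c \<subseteq> A}"
      then obtain c where c: "c \<in> ?T // E" "c \<subseteq> A" "z \<in> c" by blast
      then have cz: "c = E `` {z}" using class_in[OF E] by blast
      have zT: "z \<in> ?T" using c Union_quotient[OF E] by blast
      have "z \<notin> E `` (?T - A)"
      proof
        assume "z \<in> E `` (?T - A)"
        then obtain w where w: "w \<in> ?T - A" "(w, z) \<in> E" by blast
        then have "(z, w) \<in> E" using symE by blast
        then have "w \<in> c" using cz by blast
        then show False using w c by blast
      qed
      then show "z \<in> ?T - E `` (?T - A)" using zT by blast
    qed
  next
    show "?T - E `` (?T - A) \<subseteq> \<Union>{c \<in> ?T // E. c \<subseteq> A}"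
    proof
      fix z assume z: "z \<in> ?T - E `` (?T - A)"
      have sub: "E `` {z} \<subseteq> A"
      proof
        fix u assume "u \<in> E `` {z}"
        then have u: "(z, u) \<in> E" by simp
        then have uz: "(u, z) \<in> E" by (rule symE)
        have uT: "u \<in> ?T" using u Esub by blast
        show "u \<in> A"
        proof (rule ccontr)
          assume "u \<notin> A"
          then have "u \<in> ?T - A" using uT by simp
          then have "z \<in> E `` (?T - A)" by (rule ImageI[OF uz])
          then show False using z by simp
        qed
      qed
      have zT: "z \<in> ?T" using z by simp
      have q: "E `` {z} \<in> ?T // E" using zT by (rule quotientI)
      have "z \<in> E `` {z}" by (rule equiv_class_self[OF E zT])
      then show "z \<in> \<Union>{c \<in> ?T // E. c \<subseteq> A}" using q sub by blast
    qed
  qed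
  have "openin X (?T - E `` (?T - A))" using cl by blast
  then show ?thesis unfolding openin_quot[OF E] eq by blast
qed

lemma khaus_quot:
  assumes X: "khaus X" and E: "equiv (topspace X) E" and Ec: "closedin (prod_topology X X) E"
  shows "khaus (quotient_space X E)"
proof -
  let ?T = "topspace X"
  let ?Q = "quotient_space X E"
  have cpt: "compact_space X" and H: "Hausdorff_space X" using X unfolding khaus_def by auto
  have "compactin ?Q ((\<lambda>x. E `` {x}) ` ?T)"
    by (rule image_compactin[OF _ cont_quot[OF E]]) (use cpt in \<open>simp add: compact_space_def\<close>)
  moreover have "(\<lambda>x. E `` {x}) ` ?T = topspace ?Q"
    unfolding topspace_quot[OF E] quotient_def by blast
  ultimately have cQ: "compact_space ?Q" unfolding compact_space_def by simp
  have nrm: "normal_space X" using compact_Hausdorff_or_regular_imp_normal_space cpt H by blast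
  have hQ: "Hausdorff_space ?Q"
    unfolding Hausdorff_space_def topspace_quot[OF E]
  proof (intro allI impI)
    fix c d assume cd: "c \<in> ?T // E \<and> d \<in> ?T // E \<and> c \<noteq> d"
    then obtain a b where ab: "a \<in> ?T" "b \<in> ?T" "c = E `` {a}" "d = E `` {b}" by (meson quotientE)
    have Esub: "E \<subseteq> ?T \<times> ?T" using E unfolding equiv_def by blast
    have closedcl: "closedin X (E `` {a})" if "a \<in> ?T" for a
      by (rule closed_Image[OF cpt Esub Ec closedin_Hausdorff_singleton[OF H that]])
    have "c \<inter> d = {}" using quotient_disj[OF E] cd by blast
    then obtain A B where AB: "openin X A" "openin X B" "c \<subseteq> A" "d \<subseteq> B" "disjnt A B"
      using nrm[unfolded normal_space_def, rule_format, of c d] closedcl ab unfolding disjnt_def by metis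
    let ?A = "{e \<in> ?T // E. e \<subseteq> A}" and ?B = "{e \<in> ?T // E. e \<subseteq> B}"
    have "openin ?Q ?A" "openin ?Q ?B" using quot_open_sat[OF cpt E Ec] AB by auto
    moreover have "c \<in> ?A" "d \<in> ?B" using cd AB by auto
    moreover have "disjnt ?A ?B"
      unfolding disjnt_def
    proof (rule ccontr)
      assume "?A \<inter> ?B \<noteq> {}"
      then obtain e where e: "e \<in> ?T // E" "e \<subseteq> A" "e \<subseteq> B" by blast
      then have "e \<noteq> {}" using in_quotient_imp_non_empty[OF E] by blast
      then show False using e AB(5) unfolding disjnt_def by blast
    qed
    ultimately show "\<exists>U V. openin ?Q U \<and> openin ?Q V \<and> c \<in> U \<and> d \<in> V \<and> disjnt U V" by blast
  qed
  show ?thesis unfolding khaus_def using cQ hQ by blast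
qed


definition EGr :: "'c topology \<Rightarrow> ('c \<Rightarrow> 'a) \<Rightarrow> ('c \<times> 'c) set" where
  "EGr Y g = {(y, y'). y \<in> topspace Y \<and> y' \<in> topspace Y \<and> g y = g y'}"

lemma gcover_ok:
  fixes X :: "'a topology"
  assumes X: "khaus X"
  shows "gleason_cover X (fst (gcover X)) (snd (gcover X))"
proof -
  have "(\<lambda>(Y, g). gleason_cover X Y g) (GTop X, gmap X)"
    using gleason_cover_GT[OF X] by simp
  then have "\<exists>z :: 'a set set topology \<times> ('a set set \<Rightarrow> 'a). (\<lambda>(Y, g). gleason_cover X Y g) z" by blast
  then have "(\<lambda>(Y, g). gleason_cover X Y g) (gcover X)" unfolding gcover_def by (rule someI_ex)
  then show ?thesis by (simp add: case_prod_beta)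
qed

lemma EGr_equiv: "equiv (topspace Y) (EGr Y g)"
  unfolding equiv_def refl_on_def sym_def trans_def EGr_def by auto

lemma eqz:
  assumes H: "Hausdorff_space Z" and f: "continuous_map A Z f" and h: "continuous_map B Z h"
  shows "closedin (prod_topology A B) {(a, b). a \<in> topspace A \<and> b \<in> topspace B \<and> h b = f a}"
proof -
  have c1: "continuous_map (prod_topology A B) Z (h \<circ> snd)"
    by (rule continuous_map_compose[OF continuous_map_snd h])
  have c2: "continuous_map (prod_topology A B) Z (f \<circ> fst)"
    by (rule continuous_map_compose[OF continuous_map_fst f])
  have "closedin (prod_topology A B) {z \<in> topspace (prod_topology A B). (h \<circ> snd) z = (f \<circ> fst) z}"
    by (rule closedin_continuous_maps_eq[OF H c1 c2])
  moreover have "{z \<in> topspace (prod_topology A B). (h \<circ> snd) z = (f \<circ> fst) z}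
      = {(a, b). a \<in> topspace A \<and> b \<in> topspace B \<and> h b = f a}" by auto
  ultimately show ?thesis by simp
qed

lemma closed_rel_conv:
  assumes "closed_rel A B R" shows "closed_rel B A (converse R)"
proof -
  have "closed_map (prod_topology A B) (prod_topology B A) (\<lambda>(x, y). (y, x))"
    by (rule homeomorphic_imp_closed_map[OF homeomorphic_map_swap])
  moreover have "converse R = (\<lambda>(x, y). (y, x)) ` R" by force
  ultimately show ?thesis using assms unfolding closed_rel_def closed_map_def by metis
qed

lemma ED_tot:
  assumes H: "Hausdorff_space Y" and ed: "extremally_disconnected Y" and y: "y \<in> topspace Y"
  shows "connected_component_of_set Y y = {y}"
proof (rule set_eqI)
  fix z
  show "z \<in> connected_component_of_set Y y \<longleftrightarrow> z \<in> {y}"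
  proof
    assume "z \<in> connected_component_of_set Y y"
    then have cc: "connected_component_of Y y z" by simp
    then obtain C where C: "connectedin Y C" "y \<in> C" "z \<in> C" unfolding connected_component_of_def by blast
    have zt: "z \<in> topspace Y" using connected_component_in_topspace[OF cc] by blast
    show "z \<in> {y}"
    proof (rule ccontr)
      assume "z \<notin> {y}"
      then have "y \<noteq> z" by simp
      then obtain A B where AB: "openin Y A" "openin Y B" "y \<in> A" "z \<in> B" "disjnt A B"
        using H[unfolded Hausdorff_space_def, rule_format, OF conjI[OF y conjI[OF zt]]] by blast
      let ?K = "Y closure_of A"
      have Ko: "openin Y ?K" using ed AB(1) unfolding extremally_disconnected_def by blast
      have Kc: "closedin Y ?K" by simp
      have "A \<subseteq> ?K" using closure_of_subset[OF openin_subset[OF AB(1)]] .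
      then have yK: "y \<in> ?K" using AB(3) by blast
      have "B \<inter> ?K = {}" using openin_Int_closure_of_eq_empty[OF AB(2)] AB(5) unfolding disjnt_def by blast
      then have zK: "z \<notin> ?K" using AB(4) by blast
      from connectedin_clopen_cases[OF C(1) Kc Ko] show False
        using yK zK C(2,3) unfolding disjnt_def by blast
    qed
  next
    assume "z \<in> {y}"
    then have "z = y" by simp
    moreover have "connected_component_of Y y y" using connected_component_of_refl[of Y y] y by simp
    ultimately show "z \<in> connected_component_of_set Y y" by simp
  qed
qed

lemma G_closed:
  assumes HX: "Hausdorff_space X" and cont: "continuous_map Y X g"
  shows "closed_rel Y Y (EGr Y g)"
proof -
  have "closedin (prod_topology Y Y) {(a, b). a \<in> topspace Y \<and> b \<in> topspace Y \<and> g b = g a}"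
    by (rule eqz[OF HX cont cont])
  moreover have "{(a, b). a \<in> topspace Y \<and> b \<in> topspace Y \<and> g b = g a} = EGr Y g"
    unfolding EGr_def by auto
  ultimately show ?thesis unfolding closed_rel_def by simp
qed

lemma G_irr:
  assumes gc: "gleason_cover X Y g" and F: "closedin Y F" "F \<subset> topspace Y"
  shows "EGr Y g `` F \<noteq> topspace Y"
proof
  assume eq: "EGr Y g `` F = topspace Y"
  have surj: "g ` topspace Y = topspace X"
    and irr_all: "\<forall>F. closedin Y F \<and> F \<subset> topspace Y \<longrightarrow> g ` F \<noteq> topspace X"
    using gc unfolding gleason_cover_def by blast+
  have irr: "g ` F \<noteq> topspace X" using irr_all[rule_format, OF conjI[OF F(1) F(2)]] .
  have "g ` F = topspace X"
  proof
    have "g ` F \<subseteq> g ` topspace Y" using F(2) by (rule image_mono[OF psubset_imp_subset])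
    then show "g ` F \<subseteq> topspace X" unfolding surj .
    show "topspace X \<subseteq> g ` F"
    proof
      fix x assume "x \<in> topspace X"
      then have "x \<in> g ` topspace Y" unfolding surj .
      then obtain y where y: "y \<in> topspace Y" "g y = x" by blast
      then have "y \<in> EGr Y g `` F" using eq by simp
      then obtain f where f: "f \<in> F" "(f, y) \<in> EGr Y g" by blast
      then have "g f = g y" unfolding EGr_def by simp
      then show "x \<in> g ` F" using y f(1) by (metis image_eqI)
    qed
  qed
  then show False using irr by blast
qed

lemma G_gleason:
  assumes X: "khaus X" and gc: "gleason_cover X Y g"
  shows "gleason_space (Y, EGr Y g)"
proof -
  have kY: "khaus Y" and ed: "extremally_disconnected Y" and cont: "continuous_map Y X g"
    using gc unfolding gleason_cover_def by auto
  have HY: "Hausdorff_space Y" using kY unfolding khaus_def by blast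
  have HX: "Hausdorff_space X" using X unfolding khaus_def by blast
  have st: "stone_space Y" unfolding stone_space_def using kY ED_tot[OF HY ed] by blast
  have cl: "closed_rel Y Y (EGr Y g)" by (rule G_closed[OF HX cont])
  have ir: "\<forall>F. closedin Y F \<and> F \<subset> topspace Y \<longrightarrow> EGr Y g `` F \<noteq> topspace Y"
    using G_irr[OF gc] by blast
  have so: "stoneE_obj (Y, EGr Y g)" unfolding stoneE_obj_def using st EGr_equiv cl by simp
  show ?thesis unfolding gleason_space_def prod.case using so ed ir by blast
qed

lemma hclass:
  assumes y: "y \<in> topspace Y"
  shows "g (SOME z. z \<in> EGr Y g `` {y}) = g y"
proof -
  define s where "s = (SOME z. z \<in> EGr Y g `` {y})"
  have "y \<in> EGr Y g `` {y}" using y unfolding EGr_def by simp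
  then have "s \<in> EGr Y g `` {y}" unfolding s_def by (rule someI)
  then have "(y, s) \<in> EGr Y g" by simp
  then have "g s = g y" unfolding EGr_def by simp
  then show ?thesis unfolding s_def .
qed

definition hh :: "('c \<Rightarrow> 'a) \<Rightarrow> 'c set \<Rightarrow> 'a" where "hh g c = g (SOME y. y \<in> c)"

definition epsr :: "'a topology \<Rightarrow> 'c topology \<Rightarrow> ('c \<Rightarrow> 'a) \<Rightarrow> ('a \<times> 'c set) set" where
  "epsr X Y g = {(x, EGr Y g `` {y}) | x y. x \<in> topspace X \<and> y \<in> topspace Y \<and> g y = x}"

context
  fixes X :: "'a topology" and Y :: "'c topology" and g :: "'c \<Rightarrow> 'a"
  assumes X: "khaus X" and gc: "gleason_cover X Y g"
begin

lemma cu_cont: "continuous_map Y X g" using gc unfolding gleason_cover_def by auto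
lemma cu_surj: "g ` topspace Y = topspace X" using gc unfolding gleason_cover_def by auto
lemma cu_TQ: "topspace (quotient_space Y (EGr Y g)) = topspace Y // EGr Y g"
  by (rule topspace_quot[OF EGr_equiv])
lemma cu_hc: "y \<in> topspace Y \<Longrightarrow> hh g (EGr Y g `` {y}) = g y"
  unfolding hh_def by (rule hclass)

lemma cu_hcont: "continuous_map (quotient_space Y (EGr Y g)) X (hh g)"
  unfolding continuous_map_def
proof (intro conjI allI impI)
  let ?E = "EGr Y g"
  let ?Q = "quotient_space Y ?E"
  show "hh g \<in> topspace ?Q \<rightarrow> topspace X"
  proof
    fix c assume "c \<in> topspace ?Q"
    then obtain y where y: "y \<in> topspace Y" "c = ?E `` {y}" unfolding cu_TQ by (metis quotientE)
    then have "hh g c = g y" using cu_hc by simp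
    moreover have "g y \<in> g ` topspace Y" using y(1) by (rule imageI)
    ultimately show "hh g c \<in> topspace X" unfolding cu_surj by simp
  qed
  fix W assume W: "openin X W"
  have s1: "{c \<in> topspace ?Q. hh g c \<in> W} \<subseteq> topspace Y // ?E" unfolding cu_TQ by blast
  have s2: "\<Union>{c \<in> topspace ?Q. hh g c \<in> W} = {y \<in> topspace Y. g y \<in> W}"
  proof
    show "\<Union>{c \<in> topspace ?Q. hh g c \<in> W} \<subseteq> {y \<in> topspace Y. g y \<in> W}"
    proof
      fix z assume "z \<in> \<Union>{c \<in> topspace ?Q. hh g c \<in> W}"
      then obtain c where c: "c \<in> topspace Y // ?E" "hh g c \<in> W" "z \<in> c" unfolding cu_TQ by blast
      then obtain y where y: "y \<in> topspace Y" "c = ?E `` {y}" by (metis quotientE)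
      then have zz: "g z = g y" "z \<in> topspace Y" using c(3) unfolding EGr_def by auto
      have "hh g c = g y" using y cu_hc by simp
      then show "z \<in> {y \<in> topspace Y. g y \<in> W}" using c(2) zz by simp
    qed
    show "{y \<in> topspace Y. g y \<in> W} \<subseteq> \<Union>{c \<in> topspace ?Q. hh g c \<in> W}"
    proof
      fix y assume y: "y \<in> {y \<in> topspace Y. g y \<in> W}"
      then have yt: "y \<in> topspace Y" and yw: "g y \<in> W" by auto
      have a: "?E `` {y} \<in> topspace ?Q" unfolding cu_TQ using yt by (rule quotientI)
      have b: "hh g (?E `` {y}) \<in> W" using cu_hc[OF yt] yw by simp
      have c: "y \<in> ?E `` {y}" using yt unfolding EGr_def by simp
      show "y \<in> \<Union>{c \<in> topspace ?Q. hh g c \<in> W}" using a b c by blast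
    qed
  qed
  have "openin Y {y \<in> topspace Y. g y \<in> W}"
    using cu_cont W unfolding continuous_map_def by blast
  then show "openin ?Q {c \<in> topspace ?Q. hh g c \<in> W}"
    unfolding openin_quot[OF EGr_equiv] s2 using s1 by blast
qed

lemma cu_eps_eq: "epsr X Y g = {(x, c). x \<in> topspace X \<and> c \<in> topspace (quotient_space Y (EGr Y g)) \<and> hh g c = x}"
proof (rule set_eqI; rule iffI)
  fix z assume "z \<in> epsr X Y g"
  then obtain x y where z: "z = (x, EGr Y g `` {y})" "x \<in> topspace X" "y \<in> topspace Y" "g y = x"
    unfolding epsr_def by blast
  have "EGr Y g `` {y} \<in> topspace Y // EGr Y g" using z(3) by (rule quotientI)
  then show "z \<in> {(x, c). x \<in> topspace X \<and> c \<in> topspace (quotient_space Y (EGr Y g)) \<and> hh g c = x}"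
    unfolding cu_TQ using z cu_hc by simp
next
  fix z assume "z \<in> {(x, c). x \<in> topspace X \<and> c \<in> topspace (quotient_space Y (EGr Y g)) \<and> hh g c = x}"
  then obtain x c where z: "z = (x, c)" "x \<in> topspace X" "c \<in> topspace Y // EGr Y g" "hh g c = x"
    unfolding cu_TQ by blast
  then obtain y where y: "y \<in> topspace Y" "c = EGr Y g `` {y}" by (metis quotientE)
  then have "g y = x" using z cu_hc by simp
  then show "z \<in> epsr X Y g" unfolding epsr_def using z y by blast
qed

lemma cu_cl: "closed_rel X (quotient_space Y (EGr Y g)) (epsr X Y g)"
proof -
  have HX: "Hausdorff_space X" using X unfolding khaus_def by blast
  have "closedin (prod_topology X (quotient_space Y (EGr Y g)))
      {(a, b). a \<in> topspace X \<and> b \<in> topspace (quotient_space Y (EGr Y g)) \<and> hh g b = id a}"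
    by (rule eqz[OF HX continuous_map_id cu_hcont])
  then show ?thesis unfolding closed_rel_def cu_eps_eq by simp
qed

lemma cu_c1: "epsr X Y g O converse (epsr X Y g) = Id_on (topspace X)"
proof (rule set_eqI; rule iffI)
  fix z assume "z \<in> epsr X Y g O converse (epsr X Y g)"
  then obtain x x' c where z: "z = (x, x')" "(x, c) \<in> epsr X Y g" "(x', c) \<in> epsr X Y g" by blast
  then have "x \<in> topspace X" "hh g c = x" "hh g c = x'" unfolding cu_eps_eq by auto
  then show "z \<in> Id_on (topspace X)" using z(1) by (auto intro: Id_onI)
next
  fix z assume "z \<in> Id_on (topspace X)"
  then obtain x where x: "z = (x, x)" "x \<in> topspace X" by blast
  then have "x \<in> g ` topspace Y" unfolding cu_surj by simp
  then obtain y where y: "y \<in> topspace Y" "g y = x" by blast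
  then have "(x, EGr Y g `` {y}) \<in> epsr X Y g" using x unfolding epsr_def by blast
  then show "z \<in> epsr X Y g O converse (epsr X Y g)" using x by blast
qed

lemma cu_c2: "converse (epsr X Y g) O epsr X Y g = Id_on (topspace (quotient_space Y (EGr Y g)))"
proof (rule set_eqI; rule iffI)
  fix z assume "z \<in> converse (epsr X Y g) O epsr X Y g"
  then obtain c x c' where z: "z = (c, c')" "x \<in> topspace X" "c \<in> topspace Y // EGr Y g" "hh g c = x"
      "c' \<in> topspace Y // EGr Y g" "hh g c' = x" unfolding cu_eps_eq cu_TQ by blast
  obtain y where y: "y \<in> topspace Y" "c = EGr Y g `` {y}" using z(3) by (metis quotientE)
  obtain y' where y': "y' \<in> topspace Y" "c' = EGr Y g `` {y'}" using z(5) by (metis quotientE)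
  have "g y = g y'" using z cu_hc y y' by simp
  then have "(y, y') \<in> EGr Y g" using y y' unfolding EGr_def by simp
  then have "c = c'" using y y' equiv_class_eq[OF EGr_equiv] by simp
  then show "z \<in> Id_on (topspace (quotient_space Y (EGr Y g)))" using z unfolding cu_TQ by (auto intro: Id_onI)
next
  fix z assume "z \<in> Id_on (topspace (quotient_space Y (EGr Y g)))"
  then obtain c where c: "z = (c, c)" "c \<in> topspace (quotient_space Y (EGr Y g))" by blast
  then have "hh g c \<in> topspace X" using cu_hcont unfolding continuous_map_def by blast
  then have "(hh g c, c) \<in> epsr X Y g" unfolding cu_eps_eq using c by simp
  then show "z \<in> converse (epsr X Y g) O epsr X Y g" using c by blast
qed

lemma counit_iso: "khaus_iso X (quotient_space Y (EGr Y g)) (epsr X Y g)"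
  unfolding khaus_iso_def using cu_cl closed_rel_conv[OF cu_cl] cu_c1 cu_c2 by blast

end


lemma counit_nat:
  assumes gc: "gleason_cover X Y g" and gc': "gleason_cover X' Y' g'" and R: "closed_rel X X' R"
  shows "R O epsr X' Y' g' = epsr X Y g O Q_mor (Y, EGr Y g) (Y', EGr Y' g')
           {(y, y'). y \<in> topspace Y \<and> y' \<in> topspace Y' \<and> (g y, g' y') \<in> R}"
proof -
  have surj: "g ` topspace Y = topspace X" using gc unfolding gleason_cover_def by blast
  have Rs: "R \<subseteq> topspace X \<times> topspace X'" using R closedin_subset unfolding closed_rel_def by force
  show ?thesis
  proof (rule set_eqI; rule iffI)
    fix z assume "z \<in> R O epsr X' Y' g'"
    then obtain x x' y' where z: "z = (x, EGr Y' g' `` {y'})" "(x, x') \<in> R" "x' \<in> topspace X'"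
      "y' \<in> topspace Y'" "g' y' = x'" unfolding epsr_def by blast
    have xt: "x \<in> topspace X" using Rs z(2) by blast
    then have "x \<in> g ` topspace Y" unfolding surj .
    then obtain y where y: "y \<in> topspace Y" "g y = x" by blast
    have e1: "(x, EGr Y g `` {y}) \<in> epsr X Y g" unfolding epsr_def using xt y by blast
    have "(y, y') \<in> {(y, y'). y \<in> topspace Y \<and> y' \<in> topspace Y' \<and> (g y, g' y') \<in> R}"
      using y z by simp
    then have e2: "(EGr Y g `` {y}, EGr Y' g' `` {y'}) \<in> Q_mor (Y, EGr Y g) (Y', EGr Y' g')
           {(y, y'). y \<in> topspace Y \<and> y' \<in> topspace Y' \<and> (g y, g' y') \<in> R}"
      unfolding Q_mor_def by auto
    show "z \<in> epsr X Y g O Q_mor (Y, EGr Y g) (Y', EGr Y' g')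
           {(y, y'). y \<in> topspace Y \<and> y' \<in> topspace Y' \<and> (g y, g' y') \<in> R}"
      using e1 e2 z(1) by blast
  next
    fix z assume "z \<in> epsr X Y g O Q_mor (Y, EGr Y g) (Y', EGr Y' g')
           {(y, y'). y \<in> topspace Y \<and> y' \<in> topspace Y' \<and> (g y, g' y') \<in> R}"
    then obtain x c c' where z: "z = (x, c')" "(x, c) \<in> epsr X Y g"
      "(c, c') \<in> Q_mor (Y, EGr Y g) (Y', EGr Y' g')
           {(y, y'). y \<in> topspace Y \<and> y' \<in> topspace Y' \<and> (g y, g' y') \<in> R}" by blast
    obtain y where y: "c = EGr Y g `` {y}" "y \<in> topspace Y" "g y = x" using z(2) unfolding epsr_def by blast
    obtain a b where ab: "c = EGr Y g `` {a}" "c' = EGr Y' g' `` {b}" "a \<in> topspace Y" "b \<in> topspace Y'"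
      "(g a, g' b) \<in> R" using z(3) unfolding Q_mor_def by auto
    have "y \<in> c" unfolding y(1) EGr_def using y(2) by simp
    then have "y \<in> EGr Y g `` {a}" using ab(1) by simp
    then have "g a = g y" unfolding EGr_def by simp
    then have xR: "(x, g' b) \<in> R" using ab y by simp
    have "g' b \<in> topspace X'" using Rs xR by blast
    then have "(g' b, c') \<in> epsr X' Y' g'" unfolding epsr_def using ab by blast
    then show "z \<in> R O epsr X' Y' g'" using xR z(1) by blast
  qed
qed

definition etar :: "'a topology \<Rightarrow> ('a \<times> 'a) set \<Rightarrow> 'c topology \<Rightarrow> ('c \<Rightarrow> 'a set) \<Rightarrow> ('a \<times> 'c) set" where
  "etar X E Y g = {(x, y). x \<in> topspace X \<and> y \<in> topspace Y \<and> g y = E `` {x}}"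

lemma stoneE_obj_facts:
  assumes "stoneE_obj (X, E)"
  shows "khaus X" "equiv (topspace X) E" "closedin (prod_topology X X) E"
  using assms unfolding stoneE_obj_def stone_space_def closed_rel_def by auto

context
  fixes X :: "'a topology" and E and Y :: "'c topology" and g :: "'c \<Rightarrow> 'a set"
  assumes so: "stoneE_obj (X, E)" and gc: "gleason_cover (quotient_space X E) Y g"
begin

lemma un_E: "equiv (topspace X) E" using stoneE_obj_facts[OF so] by blast
lemma un_kQ: "khaus (quotient_space X E)"
  using stoneE_obj_facts[OF so] khaus_quot by blast
lemma un_surj: "g ` topspace Y = topspace X // E"
  using gc topspace_quot[OF un_E] unfolding gleason_cover_def by simp
lemma un_gc: "continuous_map Y (quotient_space X E) g" using gc unfolding gleason_cover_def by blast
lemma un_gmaps: "y \<in> topspace Y \<Longrightarrow> g y \<in> topspace X // E"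
proof -
  assume "y \<in> topspace Y"
  then have "g y \<in> g ` topspace Y" by (rule imageI)
  then show ?thesis unfolding un_surj .
qed

lemma un_refl: "x \<in> topspace X \<Longrightarrow> (x, x) \<in> E"
  using un_E unfolding equiv_def refl_on_def by blast
lemma un_cls: "(x, x') \<in> E \<longleftrightarrow> x \<in> topspace X \<and> x' \<in> topspace X \<and> E `` {x} = E `` {x'}"
  using equiv_class_eq_iff[OF un_E] by blast

lemma un_closed: "closed_rel X Y (etar X E Y g)"
proof -
  have H: "Hausdorff_space (quotient_space X E)" using un_kQ unfolding khaus_def by blast
  have "closedin (prod_topology X Y) {(a, b). a \<in> topspace X \<and> b \<in> topspace Y \<and> g b = E `` {a}}"
    by (rule eqz[OF H cont_quot[OF un_E] un_gc])
  then show ?thesis unfolding closed_rel_def etar_def .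
qed

lemma un_mor: "stoneE_mor (X, E) (Y, EGr Y g) (etar X E Y g)"
proof -
  have a: "E O etar X E Y g = etar X E Y g"
  proof (rule set_eqI; rule iffI)
    fix z assume "z \<in> E O etar X E Y g"
    then obtain x a y where "z = (x, y)" "(x, a) \<in> E" "(a, y) \<in> etar X E Y g" by blast
    then show "z \<in> etar X E Y g" unfolding etar_def using un_cls by auto
  next
    fix z assume z: "z \<in> etar X E Y g"
    then obtain x y where "z = (x, y)" "x \<in> topspace X" by (auto simp: etar_def)
    then show "z \<in> E O etar X E Y g" using z un_refl by blast
  qed
  have b: "etar X E Y g O EGr Y g = etar X E Y g"
  proof (rule set_eqI; rule iffI)
    fix z assume "z \<in> etar X E Y g O EGr Y g"
    then obtain x a y where "z = (x, y)" "(x, a) \<in> etar X E Y g" "(a, y) \<in> EGr Y g" by blast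
    then show "z \<in> etar X E Y g" unfolding etar_def EGr_def by auto
  next
    fix z assume z: "z \<in> etar X E Y g"
    then obtain x y where zz: "z = (x, y)" "y \<in> topspace Y" by (auto simp: etar_def)
    then have "(y, y) \<in> EGr Y g" unfolding EGr_def by simp
    then show "z \<in> etar X E Y g O EGr Y g" using z zz by blast
  qed
  show ?thesis unfolding stoneE_mor_def using un_closed a b by simp
qed

lemma un_mor': "stoneE_mor (Y, EGr Y g) (X, E) (converse (etar X E Y g))"
proof -
  have a: "EGr Y g O converse (etar X E Y g) = converse (etar X E Y g)"
  proof (rule set_eqI; rule iffI)
    fix z assume "z \<in> EGr Y g O converse (etar X E Y g)"
    then obtain y a x where "z = (y, x)" "(y, a) \<in> EGr Y g" "(x, a) \<in> etar X E Y g" by blast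
    then show "z \<in> converse (etar X E Y g)" unfolding etar_def EGr_def by auto
  next
    fix z assume z: "z \<in> converse (etar X E Y g)"
    then obtain x y where zz: "z = (y, x)" "y \<in> topspace Y" by (auto simp: etar_def)
    then have "(y, y) \<in> EGr Y g" unfolding EGr_def by simp
    then show "z \<in> EGr Y g O converse (etar X E Y g)" using z zz by blast
  qed
  have b: "converse (etar X E Y g) O E = converse (etar X E Y g)"
  proof (rule set_eqI; rule iffI)
    fix z assume "z \<in> converse (etar X E Y g) O E"
    then obtain y a x where "z = (y, x)" "(a, y) \<in> etar X E Y g" "(a, x) \<in> E" by blast
    then show "z \<in> converse (etar X E Y g)" unfolding etar_def using un_cls by auto
  next
    fix z assume z: "z \<in> converse (etar X E Y g)"
    then obtain x y where "z = (y, x)" "x \<in> topspace X" by (auto simp: etar_def)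
    then show "z \<in> converse (etar X E Y g) O E" using z un_refl by blast
  qed
  show ?thesis unfolding stoneE_mor_def using closed_rel_conv[OF un_closed] a b by simp
qed

lemma un_c1: "etar X E Y g O converse (etar X E Y g) = E"
proof (rule set_eqI; rule iffI)
  fix z assume "z \<in> etar X E Y g O converse (etar X E Y g)"
  then obtain x y x' where "z = (x, x')" "(x, y) \<in> etar X E Y g" "(x', y) \<in> etar X E Y g" by blast
  then show "z \<in> E" unfolding etar_def using un_cls by auto
next
  fix z assume "z \<in> E"
  then obtain x x' where z: "z = (x, x')" "(x, x') \<in> E" by (cases z) auto
  then have xx: "x \<in> topspace X" "x' \<in> topspace X" "E `` {x} = E `` {x'}" using un_cls by auto
  have "E `` {x} \<in> topspace X // E" using xx(1) by (rule quotientI)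
  then have "E `` {x} \<in> g ` topspace Y" unfolding un_surj .
  then obtain y where y: "y \<in> topspace Y" "g y = E `` {x}" by (metis imageE)
  then have "(x, y) \<in> etar X E Y g" "(x', y) \<in> etar X E Y g" unfolding etar_def using xx by auto
  then show "z \<in> etar X E Y g O converse (etar X E Y g)" using z(1) by blast
qed

lemma un_c2: "converse (etar X E Y g) O etar X E Y g = EGr Y g"
proof (rule set_eqI; rule iffI)
  fix z assume "z \<in> converse (etar X E Y g) O etar X E Y g"
  then obtain y x y' where z: "z = (y, y')" "(x, y) \<in> etar X E Y g" "(x, y') \<in> etar X E Y g" by blast
  then have "y \<in> topspace Y" "y' \<in> topspace Y" "g y = E `` {x}" "g y' = E `` {x}"
    unfolding etar_def by auto
  then show "z \<in> EGr Y g" unfolding EGr_def z(1) by simp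
next
  fix z assume "z \<in> EGr Y g"
  then obtain y y' where z: "z = (y, y')" "y \<in> topspace Y" "y' \<in> topspace Y" "g y = g y'"
    unfolding EGr_def by blast
  have "g y \<in> topspace X // E" using un_gmaps z(2) .
  then obtain x where x: "g y = E `` {x}" "x \<in> topspace X" by (rule quotientE)
  then have "(x, y) \<in> etar X E Y g" "(x, y') \<in> etar X E Y g" unfolding etar_def using z by auto
  then show "z \<in> converse (etar X E Y g) O etar X E Y g" using z(1) by blast
qed

lemma unit_iso: "stoneE_iso (X, E) (Y, EGr Y g) (etar X E Y g)"
  unfolding stoneE_iso_def using un_mor un_mor' un_c1 un_c2 by auto

end

lemma unit_nat:
  assumes soE: "stoneE_obj (X, E)" and gc: "gleason_cover (quotient_space X E) Y g"
    and mor: "stoneE_mor (X, E) (X', E') R"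
  shows "R O etar X' E' Y' g' = etar X E Y g O
     {(y, y'). y \<in> topspace Y \<and> y' \<in> topspace Y' \<and> (g y, g' y') \<in> Q_mor (X, E) (X', E') R}"
proof -
  have E: "equiv (topspace X) E" using stoneE_obj_facts[OF soE] by blast
  have surj: "g ` topspace Y = topspace X // E"
    using gc topspace_quot[OF E] unfolding gleason_cover_def by simp
  have Rc: "closed_rel X X' R" and ER: "E O R = R" using mor unfolding stoneE_mor_def by auto
  have Rs: "R \<subseteq> topspace X \<times> topspace X'" using Rc closedin_subset unfolding closed_rel_def by force
  show ?thesis
  proof (rule set_eqI; rule iffI)
    fix z assume "z \<in> R O etar X' E' Y' g'"
    then obtain x x' y' where z: "z = (x, y')" "(x, x') \<in> R" "x' \<in> topspace X'" "y' \<in> topspace Y'"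
      "g' y' = E' `` {x'}" unfolding etar_def by blast
    have xt: "x \<in> topspace X" using Rs z(2) by blast
    then have "E `` {x} \<in> topspace X // E" by (rule quotientI)
    then have "E `` {x} \<in> g ` topspace Y" unfolding surj .
    then obtain y where y: "y \<in> topspace Y" "g y = E `` {x}" by (metis imageE)
    have e1: "(x, y) \<in> etar X E Y g" unfolding etar_def using xt y by simp
    have "(g y, g' y') \<in> Q_mor (X, E) (X', E') R" unfolding Q_mor_def using y z by auto
    then show "z \<in> etar X E Y g O
     {(y, y'). y \<in> topspace Y \<and> y' \<in> topspace Y' \<and> (g y, g' y') \<in> Q_mor (X, E) (X', E') R}"
      using e1 y z by blast
  next
    fix z assume "z \<in> etar X E Y g O
     {(y, y'). y \<in> topspace Y \<and> y' \<in> topspace Y' \<and> (g y, g' y') \<in> Q_mor (X, E) (X', E') R}"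
    then obtain x y y' where z: "z = (x, y')" "(x, y) \<in> etar X E Y g" "y' \<in> topspace Y'"
      "(g y, g' y') \<in> Q_mor (X, E) (X', E') R" by blast
    have x: "x \<in> topspace X" "g y = E `` {x}" using z(2) unfolding etar_def by auto
    obtain a b where ab: "g y = E `` {a}" "g' y' = E' `` {b}" "(a, b) \<in> R" using z(4) unfolding Q_mor_def by auto
    have "E `` {x} = E `` {a}" using x ab by simp
    moreover have "a \<in> topspace X" using ab Rs by blast
    ultimately have "(x, a) \<in> E" using eq_equiv_class_iff[OF E x(1)] by blast
    then have xb: "(x, b) \<in> R" using ab(3) ER by blast
    have "b \<in> topspace X'" using xb Rs by blast
    then have "(b, y') \<in> etar X' E' Y' g'" unfolding etar_def using z ab by simp
    then show "z \<in> R O etar X' E' Y' g'" using xb z(1) by blast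
  qed
qed


lemma G_obj_eq: "G_obj Z = (fst (gcover Z), EGr (fst (gcover Z)) (snd (gcover Z)))"
  unfolding G_obj_def EGr_def by (simp add: case_prod_beta)

lemma G_mor_eq: "G_mor Z Z' S = {(y, y'). y \<in> topspace (fst (gcover Z)) \<and> y' \<in> topspace (fst (gcover Z'))
     \<and> (snd (gcover Z) y, snd (gcover Z') y') \<in> S}"
  unfolding G_mor_def by (simp add: case_prod_beta)

lemma unit_rel_eq: "unit_rel (X, E) = etar X E (fst (gcover (quotient_space X E))) (snd (gcover (quotient_space X E)))"
  unfolding unit_rel_def etar_def Q_obj_def by (simp add: case_prod_beta)

lemma counit_rel_eq: "counit_rel X = epsr X (fst (gcover X)) (snd (gcover X))"
  unfolding counit_rel_def epsr_def G_obj_eq by (simp add: case_prod_beta)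

lemma QQ: "Q_obj (X, E) = quotient_space X E" by (simp add: Q_obj_def)

lemma so_kQ: "stoneE_obj (X, E) \<Longrightarrow> khaus (quotient_space X E)"
  using stoneE_obj_facts khaus_quot by blast

lemma gs_so: "gleason_space (X, E) \<Longrightarrow> stoneE_obj (X, E)"
  unfolding gleason_space_def by blast

theorem theorem4p6:
  fixes X :: "'a topology" and E :: "('a \<times> 'a) set"
    and X' :: "'b topology" and E' :: "('b \<times> 'b) set"
    and R :: "('a \<times> 'b) set"
  shows
   "(stoneE_obj (X, E) \<longrightarrow>
       gleason_space (G_obj (Q_obj (X, E))) \<and> stoneE_isomorphic (X, E) (G_obj (Q_obj (X, E))))
  \<and> (gleason_space (X, E) \<longrightarrow>
       stoneE_iso (X, E) (G_obj (Q_obj (X, E))) (unit_rel (X, E)))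
  \<and> (gleason_space (X, E) \<and> gleason_space (X', E') \<and> stoneE_mor (X, E) (X', E') R \<longrightarrow>
       R O unit_rel (X', E') =
       unit_rel (X, E) O G_mor (Q_obj (X, E)) (Q_obj (X', E')) (Q_mor (X, E) (X', E') R))
  \<and> (khaus X \<longrightarrow>
       gleason_space (G_obj X) \<and> khaus_iso X (Q_obj (G_obj X)) (counit_rel X))
  \<and> (khaus X \<and> khaus X' \<and> closed_rel X X' R \<longrightarrow>
       R O counit_rel X' = counit_rel X O Q_mor (G_obj X) (G_obj X') (G_mor X X' R))"
proof (intro conjI impI)
  assume so: "stoneE_obj (X, E)"
  have kQ: "khaus (quotient_space X E)" using so_kQ[OF so] .
  have gc: "gleason_cover (quotient_space X E) (fst (gcover (quotient_space X E))) (snd (gcover (quotient_space X E)))"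
    by (rule gcover_ok[OF kQ])
  show "gleason_space (G_obj (Q_obj (X, E)))"
    unfolding QQ G_obj_eq by (rule G_gleason[OF kQ gc])
  show "stoneE_isomorphic (X, E) (G_obj (Q_obj (X, E)))"
    unfolding QQ G_obj_eq stoneE_isomorphic_def using unit_iso[OF so gc] by blast
next
  assume gs: "gleason_space (X, E)"
  have so: "stoneE_obj (X, E)" by (rule gs_so[OF gs])
  have kQ: "khaus (quotient_space X E)" using so_kQ[OF so] .
  have gc: "gleason_cover (quotient_space X E) (fst (gcover (quotient_space X E))) (snd (gcover (quotient_space X E)))"
    by (rule gcover_ok[OF kQ])
  show "stoneE_iso (X, E) (G_obj (Q_obj (X, E))) (unit_rel (X, E))"
    unfolding QQ G_obj_eq unit_rel_eq by (rule unit_iso[OF so gc])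
next
  assume H: "gleason_space (X, E) \<and> gleason_space (X', E') \<and> stoneE_mor (X, E) (X', E') R"
  have so: "stoneE_obj (X, E)" using gs_so H by blast
  have kQ: "khaus (quotient_space X E)" using so_kQ[OF so] .
  have gc: "gleason_cover (quotient_space X E) (fst (gcover (quotient_space X E))) (snd (gcover (quotient_space X E)))"
    by (rule gcover_ok[OF kQ])
  have mor: "stoneE_mor (X, E) (X', E') R" using H by blast
  show "R O unit_rel (X', E') =
       unit_rel (X, E) O G_mor (Q_obj (X, E)) (Q_obj (X', E')) (Q_mor (X, E) (X', E') R)"
    unfolding QQ G_mor_eq unit_rel_eq by (rule unit_nat[OF so gc mor])
next
  assume X: "khaus X"
  have gc: "gleason_cover X (fst (gcover X)) (snd (gcover X))" by (rule gcover_ok[OF X])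
  show "gleason_space (G_obj X)" unfolding G_obj_eq by (rule G_gleason[OF X gc])
  show "khaus_iso X (Q_obj (G_obj X)) (counit_rel X)"
    unfolding G_obj_eq Q_obj_def counit_rel_eq using counit_iso[OF X gc] by simp
next
  assume H: "khaus X \<and> khaus X' \<and> closed_rel X X' R"
  have gc: "gleason_cover X (fst (gcover X)) (snd (gcover X))" using gcover_ok H by blast
  have gc': "gleason_cover X' (fst (gcover X')) (snd (gcover X'))" using gcover_ok H by blast
  have Rc: "closed_rel X X' R" using H by blast
  show "R O counit_rel X' = counit_rel X O Q_mor (G_obj X) (G_obj X') (G_mor X X' R)"
    unfolding G_obj_eq G_mor_eq counit_rel_eq by (rule counit_nat[OF gc gc' Rc])
qed


end
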